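(* Let $A$ be a commutative $\mathbb Q$-algebra, $a\in A$ a non-zero-divisor, $B=A[z]$ and $\mathcal D=\partial_z-a:B\to B$, $h\mapsto h'-ah$. Let $f=c_0+c_1z+\cdots+c_dz^d\in B$ be such that $v_a(c_i)\ge i$ for $0\le i\le d$, and such that for some $t\le d$ we have $v_a(c_t)\ge t+1$. Put $\tilde f=f-c_tz^t$. If $f^m\in\mathrm{Im}\,\mathcal D$ for some $m\ge1$, then $\tilde f^m\in\mathrm{Im}\,\mathcal D$.
   Context: For $c\in A$, the $a$-order $v_a(c)\in\mathbb Z_{\ge0}\cup\{\infty\}$ is the supremum of the integers $m\ge0$ with $c\in Aa^m$ (so $v_a(c)=\infty$ if $c\in\bigcap_{m\ge1}Aa^m$). *)

theory Defs
  imports "HOL-Computational_Algebra.Polynomial" "HOL-Library.Extended_Nat"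
begin

definition a_order :: "'a::comm_ring_1 \<Rightarrow> 'a \<Rightarrow> enat" where
  "a_order a c = Sup {enat m | m. a ^ m dvd c}"

text \<open>Formal derivative d/dz on A[z] for an arbitrary commutative ring
  (the library's pderiv requires no zero divisors).\<close>
definition poly_deriv :: "'a::comm_ring_1 poly \<Rightarrow> 'a poly" where
  "poly_deriv h = (\<Sum>i\<in>{1..degree h}. monom (of_nat i * coeff h i) (i - 1))"

definition Dop :: "'a::comm_ring_1 \<Rightarrow> 'a poly \<Rightarrow> 'a poly" where
  "Dop a h = poly_deriv h - smult a h"

text \<open>A commutative ring is a Q-algebra iff every positive integer is invertible in it.\<close>
definition is_Q_algebra :: "'a::comm_ring_1 itself \<Rightarrow> bool" where
  "is_Q_algebra _ \<longleftrightarrow> (\<forall>n::nat. n > 0 \<longrightarrow> (of_nat n :: 'a) dvd 1)"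

end

theory Submission
  imports Defs
begin

lemma coeff_poly_deriv: "coeff (poly_deriv h) i = of_nat (i+1) * coeff h (i+1)"
proof -
  have "coeff (poly_deriv h) i = (\<Sum>k\<in>{1..degree h}. if k - 1 = i then of_nat k * coeff h k else 0)"
    by (simp add: poly_deriv_def coeff_sum coeff_monom)
  also have "\<dots> = (\<Sum>k\<in>{1..degree h}. if k = i + 1 then of_nat (i+1) * coeff h (i+1) else 0)"
    by (rule sum.cong) auto
  also have "\<dots> = of_nat (i+1) * coeff h (i+1)"
  proof (cases "i + 1 \<le> degree h")
    case True then show ?thesis by (simp add: sum.delta)
  next
    case False then show ?thesis by (simp add: sum.delta coeff_eq_0)
  qed
  finally show ?thesis .
qed

lemma Dop_add: "Dop a (x + y) = Dop a x + Dop a y"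
  by (rule poly_eqI) (simp add: Dop_def coeff_poly_deriv algebra_simps)

lemma Dop_minus: "Dop a (- x) = - Dop a x"
  by (rule poly_eqI) (simp add: Dop_def coeff_poly_deriv algebra_simps)

lemma range_add: "x \<in> range (Dop a) \<Longrightarrow> y \<in> range (Dop a) \<Longrightarrow> x + y \<in> range (Dop a)"
proof -
  assume "x \<in> range (Dop a)" "y \<in> range (Dop a)"
  then obtain u v where "x = Dop a u" "y = Dop a v" by blast
  then have "x + y = Dop a (u + v)" by (simp add: Dop_add)
  then show ?thesis by blast
qed

lemma range_diff: "x \<in> range (Dop a) \<Longrightarrow> y \<in> range (Dop a) \<Longrightarrow> x - y \<in> range (Dop a)"
proof -
  assume "x \<in> range (Dop a)" "y \<in> range (Dop a)"
  then obtain u v where "x = Dop a u" "y = Dop a v" by blast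
  then have "x - y = Dop a (u + - v)" by (simp only: Dop_add Dop_minus diff_conv_add_uminus)
  then show ?thesis by blast
qed

lemma range_sum: "finite S \<Longrightarrow> (\<And>i. i \<in> S \<Longrightarrow> g i \<in> range (Dop a)) \<Longrightarrow> sum g S \<in> range (Dop a)"
proof (induction S rule: finite_induct)
  case empty
  have "Dop a 0 = 0" by (rule poly_eqI) (simp add: Dop_def coeff_poly_deriv)
  then show ?case using rangeI[of "Dop a" 0] by simp
next
  case (insert x F)
  have e: "sum g (insert x F) = g x + sum g F" by (rule sum.insert[OF insert.hyps])
  have "g x \<in> range (Dop a)" using insert.prems by blast
  moreover have "sum g F \<in> range (Dop a)" using insert.IH insert.prems by blast
  ultimately show ?case unfolding e by (rule range_add)
qed

lemma Dop_monom: "Dop a (monom c (Suc j)) = monom (of_nat (Suc j) * c) j - monom (a * c) (Suc j)"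
  by (rule poly_eqI) (auto simp add: Dop_def coeff_poly_deriv coeff_monom)

lemma monom_in_range: "monom (a ^ (j+1) * e) j \<in> range (Dop a)"
proof (induction j arbitrary: e)
  case 0
  have "Dop a (monom (-e) 0) = monom (a * e) 0"
    by (rule poly_eqI) (auto simp add: Dop_def coeff_poly_deriv coeff_monom)
  then show ?case using rangeI[of "Dop a" "monom (-e) 0"] by simp
next
  case (Suc j)
  have "monom (a ^ (Suc j + 1) * e) (Suc j) =
        monom (a ^ (j+1) * (of_nat (Suc j) * e)) j - Dop a (monom (a^(j+1) * e) (Suc j))"
    by (rule poly_eqI) (auto simp add: Dop_monom coeff_monom algebra_simps)
  then show ?case by (simp only:) (rule range_diff[OF Suc.IH rangeI])
qed

lemma in_range: assumes "\<forall>j. a ^ (j+1) dvd coeff g j" shows "g \<in> range (Dop a)"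
proof -
  have "(\<Sum>i\<le>degree g. monom (coeff g i) i) \<in> range (Dop a)"
  proof (rule range_sum)
    fix i
    obtain e where "coeff g i = a^(i+1) * e" using assms by (meson dvdE)
    then show "monom (coeff g i) i \<in> range (Dop a)" by (simp only: monom_in_range)
  qed simp
  then show ?thesis by (simp add: poly_as_sum_of_monoms)
qed

definition W :: "'a::comm_ring_1 \<Rightarrow> 'a poly \<Rightarrow> bool" where
  "W a p \<longleftrightarrow> (\<forall>i. a ^ i dvd coeff p i)"

lemma W_mult: "W a p \<Longrightarrow> W a q \<Longrightarrow> W a (p * q)"
  unfolding W_def coeff_mult
proof (intro allI dvd_sum)
  fix n i :: nat assume p: "\<forall>i. a ^ i dvd coeff p i" and q: "\<forall>i. a ^ i dvd coeff q i" and i: "i \<in> {..n}"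
  have "a ^ i * a ^ (n - i) dvd coeff p i * coeff q (n - i)" using p q by (simp add: mult_dvd_mono)
  moreover have "a ^ i * a ^ (n - i) = a ^ n"
  proof -
    have "i + (n - i) = n" using i by simp
    then show ?thesis by (metis power_add)
  qed
  ultimately show "a ^ n dvd coeff p i * coeff q (n - i)" by simp
qed

lemma W_one: "W a 1" by (simp add: W_def coeff_1)

lemma W_power: "W a p \<Longrightarrow> W a (p ^ n)"
  by (induction n) (simp_all add: W_one W_mult)

lemma W_sum: "(\<And>i. i \<in> S \<Longrightarrow> W a (g i)) \<Longrightarrow> W a (sum g S)"
  unfolding W_def coeff_sum by (simp add: dvd_sum)

lemma a_order_dvd:
  fixes a c :: "'a::comm_ring_1"
  assumes "a_order a c \<ge> enat i" shows "a ^ i dvd c"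
proof (rule ccontr)
  assume nd: "\<not> a ^ i dvd c"
  then have i0: "i > 0" by (cases i) auto
  have "a_order a c \<le> enat (i - 1)"
    unfolding a_order_def
  proof (rule Sup_least)
    fix x assume "x \<in> {enat m |m. a ^ m dvd c}"
    then obtain m where x: "x = enat m" and m: "a ^ m dvd c" by blast
    have "m < i"
    proof (rule ccontr)
      assume "\<not> m < i"
      then have "a ^ i dvd a ^ m" by (simp add: le_imp_power_dvd)
      with m nd show False using dvd_trans by blast
    qed
    then show "x \<le> enat (i - 1)" using x by simp
  qed
  with assms have "enat i \<le> enat (i - 1)" by (rule order_trans)
  then have "i \<le> i - 1" by simp
  with i0 show False by simp
qed

theorem lemma2p13:
  fixes a :: "'a::comm_ring_1" and f :: "'a poly" and d t m :: nat
  assumes QA: "is_Q_algebra TYPE('a)"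
    and nzd: "\<forall>x::'a. a * x = 0 \<longrightarrow> x = 0"
    and deg: "degree f \<le> d"
    and ord: "\<forall>i\<le>d. a_order a (coeff f i) \<ge> enat i"
    and t: "t \<le> d" "a_order a (coeff f t) \<ge> enat (t + 1)"
    and m: "m \<ge> 1"
    and img: "f ^ m \<in> range (Dop a)"
  shows "(f - monom (coeff f t) t) ^ m \<in> range (Dop a)"
proof -
  define c where "c = coeff f t"
  define g where "g = f - monom c t"
  have Wf: "W a f" unfolding W_def
  proof
    fix i show "a ^ i dvd coeff f i"
    proof (cases "i \<le> d")
      case True then show ?thesis using ord a_order_dvd by blast
    next
      case False then show ?thesis using deg by (simp add: coeff_eq_0)
    qed
  qed
  have ct: "a ^ (t+1) dvd c" unfolding c_def using t(2) a_order_dvd by blast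
  have Wg: "W a g" unfolding W_def
  proof
    fix i show "a ^ i dvd coeff g i"
      using Wf unfolding W_def g_def c_def by (auto simp: coeff_monom)
  qed
  define S where "S = (\<Sum>i<m. g^(m - Suc i) * f^i)"
  have WS: "W a S" unfolding S_def by (intro W_sum W_mult W_power Wf Wg)
  have diff: "f ^ m - g ^ m = monom c t * S"
    unfolding S_def by (subst power_diff_sumr2) (simp add: g_def)
  have "monom c t * S \<in> range (Dop a)"
  proof (rule in_range, rule allI)
    fix j show "a ^ (j+1) dvd coeff (monom c t * S) j"
    proof (cases "j < t")
      case True then show ?thesis by (simp add: coeff_monom_mult)
    next
      case False
      have "a ^ (t+1) * a ^ (j - t) dvd c * coeff S (j - t)"
        using ct WS unfolding W_def by (simp add: mult_dvd_mono)
      moreover have "a ^ (t+1) * a ^ (j - t) = a ^ (j+1)"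
      proof -
        have "t+1 + (j-t) = j+1" using False by simp
        then show ?thesis by (metis power_add)
      qed
      ultimately show ?thesis using False by (simp add: coeff_monom_mult)
    qed
  qed
  then have "f ^ m - (f ^ m - g ^ m) \<in> range (Dop a)" using img diff range_diff by metis
  then show ?thesis by (simp add: g_def c_def)
qed

end
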